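(* Let $\alpha\in(0,1)$, $\lambda>0$, and let $\Theta$ have density $f_\Theta(\theta)=\frac{(\theta-\lambda)^{-\alpha}\lambda^\alpha}{\theta\,\Gamma(1-\alpha)\Gamma(\alpha)}$ for $\theta\ge\lambda$ (and $0$ otherwise). Let $(X_1,\dots,X_n)$ be such that, given $\Theta=\theta$, $X_1,\dots,X_n$ are independent exponential random variables with hazard rate $\theta$. Then the $X_i$ are identically distributed with marginal survival function $\bar F_X(x)=\Pr(X_i>x)=\Gamma(\alpha,\lambda x)/\Gamma(\alpha)$, and the survival copula $\bar C$ of $(X_1,\dots,X_n)$, i.e. the function with $\Pr(X_1>x_1,\dots,X_n>x_n)=\bar C(\bar F_X(x_1),\dots,\bar F_X(x_n))$, is $$\bar C(u_1,\dots,u_n)=1-F_{G_\alpha}\big(Q_{G_\alpha}(1-u_1)+\dots+Q_{G_\alpha}(1-u_n)\big),\qquad u_i\in[0,1],$$ where $F_{G_\alpha}$ and $Q_{G_\alpha}$ denote the cdf and the quantile function of the gamma distribution with shape parameter $\alpha$ and unit scale.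
   Context: $\Gamma(a,x)=\int_x^\infty t^{a-1}e^{-t}\,dt$ is the upper incomplete gamma function. The gamma distribution with shape $\alpha$ and unit scale has density $x^{\alpha-1}e^{-x}/\Gamma(\alpha)$, $x>0$. *)

theory Defs
  imports "HOL-Probability.Probability"
begin

definition upper_inc_Gamma :: "real \<Rightarrow> real \<Rightarrow> real" where
  "upper_inc_Gamma a x = (\<integral>t\<in>{x..}. t powr (a - 1) * exp (- t) \<partial>lborel)"

definition theta_density :: "real \<Rightarrow> real \<Rightarrow> real \<Rightarrow> real" where
  "theta_density \<alpha> l \<theta> =
     (if \<theta> \<ge> l then (\<theta> - l) powr (- \<alpha>) * l powr \<alpha> / (\<theta> * Gamma (1 - \<alpha>) * Gamma \<alpha>)
      else 0)"

definition gamma_cdf :: "real \<Rightarrow> real \<Rightarrow> real" where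
  "gamma_cdf a x = (if x \<le> 0 then 0
      else (\<integral>t\<in>{0..x}. t powr (a - 1) * exp (- t) / Gamma a \<partial>lborel))"

text \<open>Quantile (generalized inverse) of the gamma distribution, taken over its
  support [0,infty), so that the quantile at 0 is 0.\<close>
definition gamma_quantile :: "real \<Rightarrow> real \<Rightarrow> real" where
  "gamma_quantile a p = Inf {x. 0 \<le> x \<and> p \<le> gamma_cdf a x}"

definition surv_copula :: "real \<Rightarrow> nat \<Rightarrow> (nat \<Rightarrow> real) \<Rightarrow> real" where
  "surv_copula a n u = 1 - gamma_cdf a (\<Sum>i<n. gamma_quantile a (1 - u i))"

definition marg_surv :: "real \<Rightarrow> real \<Rightarrow> real \<Rightarrow> real" where
  "marg_surv \<alpha> l x = upper_inc_Gamma \<alpha> (l * x) / Gamma \<alpha>"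

end

theory Submission
  imports Defs
begin


lemma GI:
  fixes b u :: real assumes b: "b > 0" and u: "u > 0"
  shows "(\<integral>\<^sup>+t. ennreal (indicator {0..} t * t powr (b - 1) * exp (- (u * t))) \<partial>lborel)
         = ennreal (Gamma b / u powr b)"
proof -
  define g where "g t = ennreal (indicator {0..} t * t powr (b - 1) * exp (- (u * t)))" for t
  have "ennreal (Gamma b) = (\<integral>\<^sup>+v. ennreal (indicator {0..} v * v powr (b - 1) / exp v) \<partial>lborel)"
    using Gamma_conv_nn_integral_real[OF b] by simp
  also have "\<dots> = ennreal \<bar>u\<bar> * (\<integral>\<^sup>+t. ennreal (indicator {0..} (0 + u * t) * (0 + u * t) powr (b - 1) / exp (0 + u * t)) \<partial>lborel)"
    by (rule nn_integral_real_affine) (use u in auto)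
  also have "(\<integral>\<^sup>+t. ennreal (indicator {0..} (0 + u * t) * (0 + u * t) powr (b - 1) / exp (0 + u * t)) \<partial>lborel)
     = (\<integral>\<^sup>+t. ennreal (u powr (b - 1)) * g t \<partial>lborel)"
  proof (rule nn_integral_cong)
    fix t :: real
    show "ennreal (indicator {0..} (0 + u * t) * (0 + u * t) powr (b - 1) / exp (0 + u * t)) = ennreal (u powr (b - 1)) * g t"
    proof (cases "t \<ge> 0")
      case True
      then show ?thesis using u unfolding g_def
        by (simp add: powr_mult ennreal_mult'[symmetric] exp_minus field_simps indicator_def)
    next
      case False
      then have "\<not> 0 \<le> u * t" using u by (simp add: zero_le_mult_iff)
      then show ?thesis using False unfolding g_def by (simp add: indicator_def)
    qed
  qed
  also have "\<dots> = ennreal (u powr (b - 1)) * (\<integral>\<^sup>+t. g t \<partial>lborel)"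
    by (rule nn_integral_cmult) (simp add: g_def)
  finally have eq0: "ennreal (Gamma b) = ennreal u * (ennreal (u powr (b - 1)) * (\<integral>\<^sup>+t. g t \<partial>lborel))"
    using u by simp
  have "ennreal u * ennreal (u powr (b - 1)) = ennreal (u powr b)"
    using u by (simp add: ennreal_mult'[symmetric] powr_diff)
  with eq0 have eq: "ennreal (Gamma b) = ennreal (u powr b) * (\<integral>\<^sup>+t. g t \<partial>lborel)"
    by (simp add: mult.assoc[symmetric])
  have "(\<integral>\<^sup>+t. g t \<partial>lborel) = ennreal (Gamma b) / ennreal (u powr b)"
    using u by (subst eq) (simp add: ennreal_mult_divide_eq mult.commute)
  also have "\<dots> = ennreal (Gamma b / u powr b)"
    using u b by (simp add: divide_ennreal Gamma_real_pos less_imp_le)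
  finally show ?thesis unfolding g_def .
qed



lemma exp_inv_int:
  fixes \<theta> :: real assumes th: "\<theta> > 0"
  shows "(\<integral>\<^sup>+r. ennreal (indicator {0<..} r * exp (- (\<theta> * r))) \<partial>lborel) = ennreal (1 / \<theta>)"
proof -
  have "(\<integral>\<^sup>+r. ennreal (indicator {0<..} r * exp (- (\<theta> * r))) \<partial>lborel)
      = (\<integral>\<^sup>+r. ennreal (indicator {0..} r * r powr (1 - 1) * exp (- (\<theta> * r))) \<partial>lborel)"
  proof (rule nn_integral_cong_AE)
    show "AE r in lborel. ennreal (indicator {0<..} r * exp (- (\<theta> * r))) =
        ennreal (indicator {0..} r * r powr (1 - 1) * exp (- (\<theta> * r)))"
      using AE_lborel_singleton[of 0] by eventually_elim (auto simp: indicator_def)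
  qed
  also have "\<dots> = ennreal (Gamma 1 / \<theta> powr 1)"
    by (rule GI) (use th in auto)
  finally show ?thesis using th by simp
qed

lemma inner_int:
  fixes l u a :: real assumes l: "l > 0" and u: "u > 0" and a: "0 < a" "a < 1"
  shows "(\<integral>\<^sup>+\<theta>. ennreal (indicator {l..} \<theta> * (\<theta> - l) powr (- a) * exp (- (\<theta> * u))) \<partial>lborel)
     = ennreal (exp (- (l * u)) * (Gamma (1 - a) / u powr (1 - a)))"
proof -
  have "(\<integral>\<^sup>+\<theta>. ennreal (indicator {l..} \<theta> * (\<theta> - l) powr (- a) * exp (- (\<theta> * u))) \<partial>lborel)
      = ennreal \<bar>1\<bar> * (\<integral>\<^sup>+t. ennreal (indicator {l..} (l + 1 * t) * ((l + 1 * t) - l) powr (- a) * exp (- ((l + 1 * t) * u))) \<partial>lborel)"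
    by (rule nn_integral_real_affine) auto
  also have "\<dots> = (\<integral>\<^sup>+t. ennreal (indicator {l..} (l + 1 * t) * ((l + 1 * t) - l) powr (- a) * exp (- ((l + 1 * t) * u))) \<partial>lborel)"
    by simp
  also have "\<dots> = (\<integral>\<^sup>+t. ennreal (exp (- (l * u))) * ennreal (indicator {0..} t * t powr ((1 - a) - 1) * exp (- (u * t))) \<partial>lborel)"
    by (intro nn_integral_cong)
       (auto simp: ennreal_mult'[symmetric] indicator_def distrib_right exp_add exp_diff exp_minus field_simps)
  also have "\<dots> = ennreal (exp (- (l * u))) * ennreal (Gamma (1 - a) / u powr (1 - a))"
    by (subst nn_integral_cmult) (use GI[of "1 - a" u] a u in auto)
  also have "\<dots> = ennreal (exp (- (l * u)) * (Gamma (1 - a) / u powr (1 - a)))"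
    by (simp add: ennreal_mult'[symmetric])
  finally show ?thesis .
qed

lemma outer_int:
  fixes l s a :: real assumes l: "l > 0" and s: "s \<ge> 0"
  shows "(\<integral>\<^sup>+r. ennreal (indicator {0<..} r * exp (- (l * (s + r))) * (s + r) powr (a - 1)) \<partial>lborel)
     = ennreal (1 / l powr a) * (\<integral>\<^sup>+v. ennreal (indicator {l * s<..} v * v powr (a - 1) * exp (- v)) \<partial>lborel)"
proof -
  have "(\<integral>\<^sup>+r. ennreal (indicator {0<..} r * exp (- (l * (s + r))) * (s + r) powr (a - 1)) \<partial>lborel)
      = ennreal \<bar>1 / l\<bar> * (\<integral>\<^sup>+v. ennreal (indicator {0<..} (- s + 1 / l * v) * exp (- (l * (s + (- s + 1 / l * v)))) * (s + (- s + 1 / l * v)) powr (a - 1)) \<partial>lborel)"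
    by (rule nn_integral_real_affine) (use l in auto)
  also have "(\<integral>\<^sup>+v. ennreal (indicator {0<..} (- s + 1 / l * v) * exp (- (l * (s + (- s + 1 / l * v)))) * (s + (- s + 1 / l * v)) powr (a - 1)) \<partial>lborel)
     = (\<integral>\<^sup>+v. ennreal (1 / l powr (a - 1)) * ennreal (indicator {l * s<..} v * v powr (a - 1) * exp (- v)) \<partial>lborel)"
  proof (intro nn_integral_cong)
    fix v :: real
    show "ennreal (indicator {0<..} (- s + 1 / l * v) * exp (- (l * (s + (- s + 1 / l * v)))) * (s + (- s + 1 / l * v)) powr (a - 1))
       = ennreal (1 / l powr (a - 1)) * ennreal (indicator {l * s<..} v * v powr (a - 1) * exp (- v))"
    proof (cases "l * s < v")
      case True
      have "0 < - s + 1 / l * v" using True l by (simp add: field_simps)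
      moreover have "v > 0" using True l s by (smt (verit) mult_nonneg_nonneg)
      ultimately show ?thesis using True l
        by (simp add: ennreal_mult'[symmetric] powr_divide field_simps)
    next
      case False
      then have "\<not> 0 < - s + 1 / l * v" using l by (simp add: field_simps)
      then show ?thesis using False by simp
    qed
  qed
  also have "\<dots> = ennreal (1 / l powr (a - 1)) * (\<integral>\<^sup>+v. ennreal (indicator {l * s<..} v * v powr (a - 1) * exp (- v)) \<partial>lborel)"
    by (rule nn_integral_cmult) simp
  finally show ?thesis using l
    by (simp add: mult.assoc[symmetric] ennreal_mult'[symmetric] powr_diff divide_simps)
qed



lemma full_int:
  fixes a :: real assumes a: "a > 0"
  shows "(\<integral>\<^sup>+v. ennreal (indicator {0..} v * (v powr (a - 1) * exp (- v))) \<partial>lborel) = ennreal (Gamma a)"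
  using Gamma_conv_nn_integral_real[OF a] by (simp add: exp_minus field_simps)

lemma part_le:
  fixes a :: real assumes a: "a > 0" and A: "A \<subseteq> {0..}"
  shows "(\<integral>\<^sup>+v. ennreal (indicator A v * (v powr (a - 1) * exp (- v))) \<partial>lborel) \<le> ennreal (Gamma a)"
proof -
  have "(\<integral>\<^sup>+v. ennreal (indicator A v * (v powr (a - 1) * exp (- v))) \<partial>lborel)
     \<le> (\<integral>\<^sup>+v. ennreal (indicator {0..} v * (v powr (a - 1) * exp (- v))) \<partial>lborel)"
    using A by (intro nn_integral_mono) (auto simp: indicator_def)
  then show ?thesis using full_int[OF a] by simp
qed

lemma part_fin:
  fixes a :: real assumes a: "a > 0" and A: "A \<subseteq> {0..}"
  shows "(\<integral>\<^sup>+v. ennreal (indicator A v * (v powr (a - 1) * exp (- v))) \<partial>lborel) < top"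
  using part_le[OF a A] by (simp add: le_less_trans)

lemma upper_real:
  fixes a y :: real assumes a: "a > 0" and y: "y \<ge> 0"
  shows "upper_inc_Gamma a y = enn2real (\<integral>\<^sup>+v. ennreal (indicator {y<..} v * (v powr (a - 1) * exp (- v))) \<partial>lborel)"
proof -
  have "upper_inc_Gamma a y = integral\<^sup>L lborel (\<lambda>t. indicator {y..} t * (t powr (a - 1) * exp (- t)))"
    unfolding upper_inc_Gamma_def set_lebesgue_integral_def by simp
  also have "\<dots> = enn2real (\<integral>\<^sup>+t. ennreal (indicator {y..} t * (t powr (a - 1) * exp (- t))) \<partial>lborel)"
    by (rule integral_eq_nn_integral; (measurable | auto intro!: AE_I2 simp: indicator_def))
  also have "(\<integral>\<^sup>+t. ennreal (indicator {y..} t * (t powr (a - 1) * exp (- t))) \<partial>lborel)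
      = (\<integral>\<^sup>+v. ennreal (indicator {y<..} v * (v powr (a - 1) * exp (- v))) \<partial>lborel)"
    by (rule nn_integral_cong_AE) (use AE_lborel_singleton[of y] in \<open>eventually_elim, auto simp: indicator_def\<close>)
  finally show ?thesis .
qed

lemma upper_eq:
  fixes a y :: real assumes a: "a > 0" and y: "y \<ge> 0"
  shows "ennreal (upper_inc_Gamma a y) = (\<integral>\<^sup>+v. ennreal (indicator {y<..} v * (v powr (a - 1) * exp (- v))) \<partial>lborel)"
  unfolding upper_real[OF a y] by (intro ennreal_enn2real part_fin[OF a]) (use y in auto)

lemma lower_eq:
  fixes a y :: real assumes a: "a > 0"
  shows "gamma_cdf a y = (if y \<le> 0 then 0 else
     enn2real (\<integral>\<^sup>+v. ennreal (indicator {0..y} v * (v powr (a - 1) * exp (- v))) \<partial>lborel) / Gamma a)"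
proof -
  have "integral\<^sup>L lborel (\<lambda>t. indicator {0..y} t *\<^sub>R (t powr (a - 1) * exp (- t) / Gamma a))
     = integral\<^sup>L lborel (\<lambda>t. indicator {0..y} t * (t powr (a - 1) * exp (- t))) / Gamma a"
    unfolding integral_divide_zero[symmetric] by (intro Bochner_Integration.integral_cong) auto
  also have "integral\<^sup>L lborel (\<lambda>t. indicator {0..y} t * (t powr (a - 1) * exp (- t)))
     = enn2real (\<integral>\<^sup>+v. ennreal (indicator {0..y} v * (v powr (a - 1) * exp (- v))) \<partial>lborel)"
    by (rule integral_eq_nn_integral; (measurable | auto intro!: AE_I2 simp: indicator_def))
  finally show ?thesis unfolding gamma_cdf_def set_lebesgue_integral_def by simp
qed

lemma cdf_eq:
  fixes a y :: real assumes a: "a > 0" and y: "y \<ge> 0"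
  shows "gamma_cdf a y = 1 - upper_inc_Gamma a y / Gamma a"
proof -
  have Gpos: "Gamma a > 0" using a by (simp add: Gamma_real_pos)
  define U where "U = (\<integral>\<^sup>+v. ennreal (indicator {y<..} v * (v powr (a - 1) * exp (- v))) \<partial>lborel)"
  define L where "L = (\<integral>\<^sup>+v. ennreal (indicator {0..y} v * (v powr (a - 1) * exp (- v))) \<partial>lborel)"
  have Uf: "U < top" unfolding U_def by (rule part_fin[OF a]) (use y in auto)
  have Lf: "L < top" unfolding L_def by (rule part_fin[OF a]) auto
  have "ennreal (Gamma a) = (\<integral>\<^sup>+v. ennreal (indicator {0..} v * (v powr (a - 1) * exp (- v))) \<partial>lborel)"
    using full_int[OF a] by simp
  also have "\<dots> = (\<integral>\<^sup>+v. ennreal (indicator {0..y} v * (v powr (a - 1) * exp (- v))) +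
                     ennreal (indicator {y<..} v * (v powr (a - 1) * exp (- v))) \<partial>lborel)"
    by (intro nn_integral_cong) (use y in \<open>auto simp: indicator_def\<close>)
  also have "\<dots> = L + U" unfolding L_def U_def by (rule nn_integral_add) auto
  finally have LU: "ennreal (Gamma a) = L + U" .
  then have "Gamma a = enn2real L + enn2real U"
    using Lf Uf Gpos by (metis enn2real_ennreal enn2real_plus less_imp_le)
  moreover have "upper_inc_Gamma a y = enn2real U"
    unfolding U_def by (rule upper_real[OF a y])
  ultimately show ?thesis
  proof (cases "y \<le> 0")
    case True
    then have "y = 0" using y by simp
    then have "L = 0" unfolding L_def
      by (intro nn_integral_0_iff_AE[THEN iffD2])
         (use AE_lborel_singleton[of 0] in \<open>auto elim!: eventually_mono simp: indicator_def\<close>)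
    with \<open>Gamma a = _\<close> \<open>upper_inc_Gamma a y = _\<close> Gpos show ?thesis
      using True by (simp add: gamma_cdf_def)
  next
    case False
    with \<open>Gamma a = _\<close> \<open>upper_inc_Gamma a y = _\<close> Gpos show ?thesis
      unfolding lower_eq[OF a] L_def[symmetric] by (simp add: field_simps)
  qed
qed



lemma upper_strict:
  fixes a y z :: real assumes a: "0 < a" "a < 1" and y: "0 \<le> y" and yz: "y < z"
  shows "upper_inc_Gamma a z < upper_inc_Gamma a y"
proof -
  define G where "G v = v powr (a - 1) * exp (- v)" for v :: real
  define Uy where "Uy = (\<integral>\<^sup>+v. ennreal (indicator {y<..} v * G v) \<partial>lborel)"
  define Uz where "Uz = (\<integral>\<^sup>+v. ennreal (indicator {z<..} v * G v) \<partial>lborel)"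
  define Mid where "Mid = (\<integral>\<^sup>+v. ennreal (indicator {y<..z} v * G v) \<partial>lborel)"
  have "Uy = (\<integral>\<^sup>+v. ennreal (indicator {y<..z} v * G v) + ennreal (indicator {z<..} v * G v) \<partial>lborel)"
    unfolding Uy_def by (intro nn_integral_cong) (use yz in \<open>auto simp: indicator_def G_def\<close>)
  also have "\<dots> = Mid + Uz" unfolding Mid_def Uz_def
    by (rule nn_integral_add) (auto simp: G_def)
  finally have sum: "Uy = Mid + Uz" .
  have Mf: "Mid < top" unfolding Mid_def G_def by (rule part_fin) (use a y in auto)
  have Uzf: "Uz < top" unfolding Uz_def G_def by (rule part_fin) (use a y yz in auto)
  define c where "c = z powr (a - 1) * exp (- z)"
  have c: "c > 0" using y yz by (simp add: c_def)
  have "(\<integral>\<^sup>+v. ennreal c * indicator {y<..z} v \<partial>lborel) \<le> Mid"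
    unfolding Mid_def
  proof (intro nn_integral_mono)
    fix v :: real
    show "ennreal c * indicator {y<..z} v \<le> ennreal (indicator {y<..z} v * G v)"
    proof (cases "v \<in> {y<..z}")
      case True
      then have v: "0 < v" "v \<le> z" using y by auto
      have "z powr (a - 1) \<le> v powr (a - 1)" by (rule powr_mono2') (use a v in auto)
      moreover have "exp (- z) \<le> exp (- v)" using v by simp
      ultimately have "c \<le> G v" unfolding c_def G_def
        by (intro mult_mono) auto
      then show ?thesis using True by (simp add: ennreal_leI)
    qed simp
  qed
  then have "ennreal (c * (z - y)) \<le> Mid" using yz c
    by (simp add: nn_integral_cmult_indicator ennreal_mult)
  moreover have "ennreal (c * (z - y)) > 0" using c yz by simp
  ultimately have "enn2real Mid > 0" using Mf
    by (metis enn2real_eq_0_iff enn2real_nonneg less_le not_less order.strict_trans1 top.not_eq_extremum)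
  have "upper_inc_Gamma a y = enn2real Uy" unfolding Uy_def G_def by (rule upper_real) (use a y in auto)
  also have "\<dots> = enn2real Mid + enn2real Uz" using sum Mf Uzf by (simp add: enn2real_plus)
  also have "enn2real Uz = upper_inc_Gamma a z" unfolding Uz_def G_def by (rule upper_real[symmetric]) (use a y yz in auto)
  finally show ?thesis using \<open>enn2real Mid > 0\<close> by simp
qed

lemma cdf_strict:
  fixes a y z :: real assumes a: "0 < a" "a < 1" and y: "0 \<le> y" and yz: "y < z"
  shows "gamma_cdf a y < gamma_cdf a z"
proof -
  have "Gamma a > 0" using a by (simp add: Gamma_real_pos)
  then show ?thesis
    using upper_strict[OF a y yz] cdf_eq[of a y] cdf_eq[of a z] a y yz
    by (simp add: divide_strict_right_mono)
qed

lemma quantile_cdf: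
  fixes a y :: real assumes a: "0 < a" "a < 1" and y: "0 \<le> y"
  shows "gamma_quantile a (gamma_cdf a y) = y"
proof -
  have "{x. 0 \<le> x \<and> gamma_cdf a y \<le> gamma_cdf a x} = {y..}"
  proof (intro set_eqI iffI)
    fix x assume "x \<in> {x. 0 \<le> x \<and> gamma_cdf a y \<le> gamma_cdf a x}"
    then have x: "0 \<le> x" "gamma_cdf a y \<le> gamma_cdf a x" by auto
    show "x \<in> {y..}"
    proof (rule ccontr)
      assume "x \<notin> {y..}"
      then have "x < y" by simp
      from cdf_strict[OF a x(1) this] x(2) show False by simp
    qed
  next
    fix x assume "x \<in> {y..}"
    then have "y \<le> x" by simp
    then have "gamma_cdf a y \<le> gamma_cdf a x"
      using cdf_strict[OF a y, of x] by (cases "y = x") auto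
    then show "x \<in> {x. 0 \<le> x \<and> gamma_cdf a y \<le> gamma_cdf a x}" using \<open>y \<le> x\<close> y by simp
  qed
  then show ?thesis unfolding gamma_quantile_def by simp
qed



lemma mix_int:
  fixes a l s :: real assumes a: "0 < a" "a < 1" and l: "l > 0" and s: "s \<ge> 0"
  shows "(\<integral>\<^sup>+\<theta>. ennreal (theta_density a l \<theta>) * ennreal (exp (- (\<theta> * s))) \<partial>lborel)
       = ennreal (upper_inc_Gamma a (l * s) / Gamma a)"
proof -
  define C where "C = Gamma (1 - a) * Gamma a"
  have Ga: "Gamma a > 0" "Gamma (1 - a) > 0" using a by (auto simp: Gamma_real_pos)
  then have C: "C > 0" by (simp add: C_def)
  define H where "H \<theta> r = indicator {l..} \<theta> * (\<theta> - l) powr (- a) * (l powr a / C) * indicator {0<..} r * exp (- (\<theta> * (s + r)))"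
    for \<theta> r :: real
  have step1: "ennreal (theta_density a l \<theta>) * ennreal (exp (- (\<theta> * s))) = (\<integral>\<^sup>+r. ennreal (H \<theta> r) \<partial>lborel)" for \<theta>
  proof (cases "l \<le> \<theta>")
    case True
    then have th: "\<theta> > 0" using l by simp
    have "(\<integral>\<^sup>+r. ennreal (H \<theta> r) \<partial>lborel)
       = (\<integral>\<^sup>+r. ennreal ((\<theta> - l) powr (- a) * (l powr a / C) * exp (- (\<theta> * s))) * ennreal (indicator {0<..} r * exp (- (\<theta> * r))) \<partial>lborel)"
      using True C l by (intro nn_integral_cong) (auto simp: H_def ennreal_mult'[symmetric] distrib_left exp_add[symmetric] indicator_def)
    also have "\<dots> = ennreal ((\<theta> - l) powr (- a) * (l powr a / C) * exp (- (\<theta> * s))) * ennreal (1 / \<theta>)"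
      by (subst nn_integral_cmult) (auto simp: exp_inv_int th)
    also have "\<dots> = ennreal (theta_density a l \<theta>) * ennreal (exp (- (\<theta> * s)))"
      using True th C l unfolding theta_density_def C_def
      by (simp add: ennreal_mult'[symmetric] field_simps)
    finally show ?thesis ..
  next
    case False
    then show ?thesis by (simp add: theta_density_def H_def)
  qed
  have meas: "case_prod (\<lambda>\<theta> r. ennreal (H \<theta> r)) \<in> borel_measurable (lborel \<Otimes>\<^sub>M lborel)"
    unfolding H_def by measurable
  have "(\<integral>\<^sup>+\<theta>. ennreal (theta_density a l \<theta>) * ennreal (exp (- (\<theta> * s))) \<partial>lborel)
      = (\<integral>\<^sup>+\<theta>. (\<integral>\<^sup>+r. ennreal (H \<theta> r) \<partial>lborel) \<partial>lborel)"
    by (simp add: step1)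
  also have "\<dots> = (\<integral>\<^sup>+r. (\<integral>\<^sup>+\<theta>. ennreal (H \<theta> r) \<partial>lborel) \<partial>lborel)"
    by (rule lborel_pair.Fubini'[OF meas, symmetric])
  also have "\<dots> = (\<integral>\<^sup>+r. ennreal (l powr a / Gamma a) * ennreal (indicator {0<..} r * exp (- (l * (s + r))) * (s + r) powr (a - 1)) \<partial>lborel)"
  proof (intro nn_integral_cong)
    fix r :: real
    show "(\<integral>\<^sup>+\<theta>. ennreal (H \<theta> r) \<partial>lborel) = ennreal (l powr a / Gamma a) * ennreal (indicator {0<..} r * exp (- (l * (s + r))) * (s + r) powr (a - 1))"
    proof (cases "r > 0")
      case True
      have u: "s + r > 0" using True s by simp
      have "(\<integral>\<^sup>+\<theta>. ennreal (H \<theta> r) \<partial>lborel)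
          = (\<integral>\<^sup>+\<theta>. ennreal (l powr a / C) * ennreal (indicator {l..} \<theta> * (\<theta> - l) powr (- a) * exp (- (\<theta> * (s + r)))) \<partial>lborel)"
        using True C l by (intro nn_integral_cong) (auto simp: H_def ennreal_mult'[symmetric] indicator_def)
      also have "\<dots> = ennreal (l powr a / C) * ennreal (exp (- (l * (s + r))) * (Gamma (1 - a) / (s + r) powr (1 - a)))"
        by (subst nn_integral_cmult) (auto simp: inner_int[OF l u a])
      also have "\<dots> = ennreal (l powr a / Gamma a) * ennreal (indicator {0<..} r * exp (- (l * (s + r))) * (s + r) powr (a - 1))"
        using True u C Ga l unfolding C_def
        by (simp add: ennreal_mult'[symmetric] powr_diff field_simps)
      finally show ?thesis .
    next
      case False
      then show ?thesis by (simp add: H_def)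
    qed
  qed
  also have "\<dots> = ennreal (l powr a / Gamma a) * (\<integral>\<^sup>+r. ennreal (indicator {0<..} r * exp (- (l * (s + r))) * (s + r) powr (a - 1)) \<partial>lborel)"
    by (rule nn_integral_cmult) simp
  also have "\<dots> = ennreal (l powr a / Gamma a) * (ennreal (1 / l powr a) * (\<integral>\<^sup>+v. ennreal (indicator {l * s<..} v * (v powr (a - 1) * exp (- v))) \<partial>lborel))"
    by (subst outer_int[OF l s]) (simp add: mult.assoc)
  also have "\<dots> = ennreal (l powr a / Gamma a) * (ennreal (1 / l powr a) * ennreal (upper_inc_Gamma a (l * s)))"
    using upper_eq[OF a(1), of "l * s"] l s by simp
  also have "\<dots> = ennreal (upper_inc_Gamma a (l * s) / Gamma a)"
    using l Ga by (simp add: ennreal_mult'[symmetric] mult.assoc[symmetric])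
  finally show ?thesis .
qed



definition Dexp :: "real \<Rightarrow> real measure" where
  "Dexp \<theta> = density lborel (exponential_density \<theta>)"

lemma sets_Dexp[simp, measurable_cong]: "sets (Dexp \<theta>) = sets borel"
  by (simp add: Dexp_def)

lemma space_Dexp[simp]: "space (Dexp \<theta>) = UNIV"
  by (simp add: Dexp_def)

lemma emeasure_Dexp_nonpos:
  assumes "\<theta> \<le> 0" shows "emeasure (Dexp \<theta>) A = 0"
proof -
  have "Dexp \<theta> = density lborel (\<lambda>_. 0)"
    unfolding Dexp_def
    by (rule density_cong) (use assms in \<open>auto simp: exponential_density_def
          ennreal_neg mult_nonpos_nonneg intro!: AE_I2\<close>)
  then show ?thesis
    by (cases "A \<in> sets borel") (auto simp: emeasure_density emeasure_notin_sets)
qed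

lemma emeasure_Dexp_UNIV_le: "emeasure (Dexp \<theta>) UNIV \<le> 1"
proof (cases "\<theta> > 0")
  case True
  then interpret prob_space "Dexp \<theta>" unfolding Dexp_def by (rule prob_space_exponential_density)
  show ?thesis using emeasure_space_1 by simp
qed (simp add: emeasure_Dexp_nonpos)

lemma subprob_Dexp: "subprob_space (Dexp \<theta>)"
  by (rule subprob_spaceI) (auto simp: emeasure_Dexp_UNIV_le)

lemma sigma_finite_Dexp: "sigma_finite_measure (Dexp \<theta>)"
proof -
  interpret subprob_space "Dexp \<theta>" by (rule subprob_Dexp)
  show ?thesis by unfold_locales
qed

lemma emeasure_Dexp_UNIV: "\<theta> > 0 \<Longrightarrow> emeasure (Dexp \<theta>) UNIV = 1"
  using prob_space.emeasure_space_1[OF prob_space_exponential_density, of \<theta>]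
  by (simp add: Dexp_def)

lemma emeasure_Dexp_gt:
  assumes th: "\<theta> > 0" and t: "t \<ge> 0"
  shows "emeasure (Dexp \<theta>) {t<..} = ennreal (exp (- (\<theta> * t)))"
proof -
  have "emeasure (Dexp \<theta>) {t<..} = (\<integral>\<^sup>+x. ennreal (indicator {t<..} x * exponential_density \<theta> x) \<partial>lborel)"
    unfolding Dexp_def
    by (subst emeasure_density) (auto intro!: nn_integral_cong simp: indicator_def)
  also have "\<dots> = ennreal \<bar>1\<bar> * (\<integral>\<^sup>+y. ennreal (indicator {t<..} (t + 1 * y) * exponential_density \<theta> (t + 1 * y)) \<partial>lborel)"
    by (rule nn_integral_real_affine) (auto simp: exponential_density_def)
  also have "\<dots> = (\<integral>\<^sup>+y. ennreal (\<theta> * exp (- (\<theta> * t))) * ennreal (indicator {0<..} y * exp (- (\<theta> * y))) \<partial>lborel)"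
    using th t by (simp, intro nn_integral_cong)
      (auto simp: ennreal_mult'[symmetric] indicator_def exponential_density_def distrib_left
         exp_add[symmetric] algebra_simps)
  also have "\<dots> = ennreal (\<theta> * exp (- (\<theta> * t))) * ennreal (1 / \<theta>)"
    by (subst nn_integral_cmult) (auto simp: exp_inv_int th)
  also have "\<dots> = ennreal (exp (- (\<theta> * t)))"
    using th by (simp add: ennreal_mult'[symmetric])
  finally show ?thesis .
qed



definition Pexp :: "nat \<Rightarrow> real \<Rightarrow> (nat \<Rightarrow> real) measure" where
  "Pexp n \<theta> = (\<Pi>\<^sub>M i\<in>{..<n}. Dexp \<theta>)"

lemma emeasure_Pexp:
  assumes "\<And>i. i < n \<Longrightarrow> E i \<in> sets borel"
  shows "emeasure (Pexp n \<theta>) (Pi\<^sub>E {..<n} E) = (\<Prod>i<n. emeasure (Dexp \<theta>) (E i))"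
proof -
  interpret product_sigma_finite "\<lambda>i. Dexp \<theta>"
    unfolding product_sigma_finite_def using sigma_finite_Dexp by simp
  show ?thesis unfolding Pexp_def by (rule emeasure_PiM) (use assms in auto)
qed

lemma space_Pexp: "space (Pexp n \<theta>) = Pi\<^sub>E {..<n} (\<lambda>_. UNIV)"
  by (simp add: Pexp_def space_PiM)

lemma sets_Pexp[measurable_cong]: "sets (Pexp n \<theta>) = sets (\<Pi>\<^sub>M i\<in>{..<n}. (borel :: real measure))"
  unfolding Pexp_def by (rule sets_PiM_cong) auto

lemma subprob_Pexp: "subprob_space (Pexp n \<theta>)"
proof (rule subprob_spaceI)
  have "emeasure (Pexp n \<theta>) (space (Pexp n \<theta>)) = (\<Prod>i<n. emeasure (Dexp \<theta>) UNIV)"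
    unfolding space_Pexp by (rule emeasure_Pexp) auto
  also have "\<dots> \<le> 1"
    by (intro prod_le_1) (auto simp: emeasure_Dexp_UNIV_le)
  finally show "emeasure (Pexp n \<theta>) (space (Pexp n \<theta>)) \<le> 1" .
  show "space (Pexp n \<theta>) \<noteq> {}" by (simp add: space_Pexp PiE_eq_empty_iff)
qed

lemma measurable_Dexp_emeasure[measurable]:
  assumes [measurable]: "A \<in> sets borel"
  shows "(\<lambda>\<theta>. emeasure (Dexp \<theta>) A) \<in> borel_measurable borel"
proof -
  have "(\<lambda>\<theta>. emeasure (Dexp \<theta>) A) = (\<lambda>\<theta>. \<integral>\<^sup>+x. ennreal (exponential_density \<theta> x) * indicator A x \<partial>lborel)"
    by (auto simp: Dexp_def emeasure_density)
  also have "\<dots> \<in> borel_measurable borel"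
    unfolding exponential_density_def by measurable
  finally show ?thesis .
qed

lemma measurable_Pexp:
  "Pexp n \<in> borel \<rightarrow>\<^sub>M subprob_algebra (\<Pi>\<^sub>M i\<in>{..<n}. (borel :: real measure))"
proof (rule measurable_subprob_algebra_generated[where \<Omega>="Pi\<^sub>E {..<n} (\<lambda>_. UNIV)" and G="prod_algebra {..<n} (\<lambda>i. borel)"])
  show "sets (\<Pi>\<^sub>M i\<in>{..<n}. (borel :: real measure)) = sigma_sets (Pi\<^sub>E {..<n} (\<lambda>_. UNIV)) (prod_algebra {..<n} (\<lambda>i. borel))"
    by (simp add: sets_PiM)
  show "Int_stable (prod_algebra {..<n} (\<lambda>i. (borel :: real measure)))" by (rule Int_stable_prod_algebra)
  show "prod_algebra {..<n} (\<lambda>i. (borel :: real measure)) \<subseteq> Pow (Pi\<^sub>E {..<n} (\<lambda>_. UNIV))"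
    using prod_algebra_sets_into_space[of "{..<n}" "\<lambda>i. (borel :: real measure)"] by simp
  show "subprob_space (Pexp n a)" for a by (rule subprob_Pexp)
  show "sets (Pexp n a) = sets (\<Pi>\<^sub>M i\<in>{..<n}. (borel :: real measure))" for a by (rule sets_Pexp)
  show "(\<lambda>a. emeasure (Pexp n a) A) \<in> borel_measurable borel" if "A \<in> prod_algebra {..<n} (\<lambda>i. borel)" for A
  proof -
    from prod_algebraE_all[OF that] obtain E where E: "A = Pi\<^sub>E {..<n} E" "E \<in> (\<Pi> i\<in>{..<n}. sets borel)" by blast
    have "(\<lambda>a. emeasure (Pexp n a) A) = (\<lambda>a. \<Prod>i<n. emeasure (Dexp a) (E i))"
      unfolding E(1) by (intro ext emeasure_Pexp) (use E(2) in auto)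
    also have "\<dots> \<in> borel_measurable borel"
      using E by (intro borel_measurable_prod_ennreal measurable_Dexp_emeasure) auto
    finally show ?thesis .
  qed
  show "(\<lambda>a. emeasure (Pexp n a) (Pi\<^sub>E {..<n} (\<lambda>_. UNIV))) \<in> borel_measurable borel"
    by (subst emeasure_Pexp) (auto intro!: borel_measurable_prod_ennreal)
qed



lemma theta_density_nonneg:
  assumes "0 < a" "a < 1" "0 < l"
  shows "theta_density a l \<theta> \<ge> 0"
  using assms by (auto simp: theta_density_def Gamma_real_pos less_imp_le intro!: divide_nonneg_pos mult_pos_pos)

lemma theta_density_meas[measurable]: "theta_density a l \<in> borel_measurable borel"
  unfolding theta_density_def by measurable

lemma main_gen:
  fixes M :: "'a measure" and \<Theta> :: "'a \<Rightarrow> real" and X :: "nat \<Rightarrow> 'a \<Rightarrow> real"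
    and \<alpha> l :: real and n :: nat
  assumes "prob_space M"
    and a: "0 < \<alpha>" "\<alpha> < 1" and l: "0 < l"
    and mT[measurable]: "\<Theta> \<in> borel_measurable M" and mX: "\<And>i. i < n \<Longrightarrow> X i \<in> borel_measurable M"
    and joint: "distr M (borel \<Otimes>\<^sub>M (\<Pi>\<^sub>M i\<in>{..<n}. borel))
                   (\<lambda>\<omega>. (\<Theta> \<omega>, \<lambda>i\<in>{..<n}. X i \<omega>))
              = density lborel (theta_density \<alpha> l) \<bind>
                  (\<lambda>\<theta>. distr (\<Pi>\<^sub>M i\<in>{..<n}. density lborel (exponential_density \<theta>))
                          (borel \<Otimes>\<^sub>M (\<Pi>\<^sub>M i\<in>{..<n}. borel)) (\<lambda>x. (\<theta>, x)))"
    and I: "I \<subseteq> {..<n}" and x: "\<And>i. i \<in> I \<Longrightarrow> 0 \<le> x i"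
  shows "measure M {\<omega>\<in>space M. \<forall>i\<in>I. x i < X i \<omega>} = upper_inc_Gamma \<alpha> (l * (\<Sum>i\<in>I. x i)) / Gamma \<alpha>"
proof -
  define S where "S = (borel :: real measure) \<Otimes>\<^sub>M (\<Pi>\<^sub>M i\<in>{..<n}. (borel :: real measure))"
  define K where "K \<theta> = distr (Pexp n \<theta>) S (\<lambda>x. (\<theta>, x))" for \<theta>
  define N where "N = density lborel (theta_density \<alpha> l)"
  define F where "F \<omega> = (\<Theta> \<omega>, \<lambda>i\<in>{..<n}. X i \<omega>)" for \<omega>
  define E where "E i = (if i \<in> I then {x i<..} else UNIV)" for i
  define A where "A = (UNIV :: real set) \<times> Pi\<^sub>E {..<n} E"
  have jointK: "distr M S F = N \<bind> K"
    using joint unfolding S_def F_def N_def K_def Pexp_def Dexp_def .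
  have E_sets: "E i \<in> sets borel" for i by (simp add: E_def)
  have A_sets: "A \<in> sets S"
    unfolding A_def S_def using E_sets by (intro pair_measureI sets_PiM_I_finite) auto
  have F_meas: "F \<in> M \<rightarrow>\<^sub>M S"
    unfolding F_def S_def using mX by (intro measurable_Pair mT measurable_restrict) auto
  have K_meas: "K \<in> N \<rightarrow>\<^sub>M subprob_algebra S"
  proof -
    have "K \<in> borel \<rightarrow>\<^sub>M subprob_algebra S"
      unfolding K_def
    proof (rule measurable_distr2[where M="\<Pi>\<^sub>M i\<in>{..<n}. (borel :: real measure)"])
      show "case_prod (\<lambda>\<theta> x. (\<theta>, x)) \<in> borel \<Otimes>\<^sub>M (\<Pi>\<^sub>M i\<in>{..<n}. borel) \<rightarrow>\<^sub>M S"
        unfolding S_def by simp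
      show "Pexp n \<in> borel \<rightarrow>\<^sub>M subprob_algebra (\<Pi>\<^sub>M i\<in>{..<n}. borel)" by (rule measurable_Pexp)
    qed
    moreover have "measurable N (subprob_algebra S) = measurable borel (subprob_algebra S)"
      by (rule measurable_cong_sets) (simp_all add: N_def)
    ultimately show ?thesis by (simp only:)
  qed
  have pre: "F -` A \<inter> space M = {\<omega>\<in>space M. \<forall>i\<in>I. x i < X i \<omega>}"
  proof -
    have "F \<omega> \<in> A \<longleftrightarrow> (\<forall>i\<in>I. x i < X i \<omega>)" for \<omega>
    proof -
      have "F \<omega> \<in> A \<longleftrightarrow> (\<forall>i\<in>{..<n}. X i \<omega> \<in> E i)"
        unfolding A_def F_def by (simp add: restrict_PiE_iff Pi_iff)
      also have "\<dots> \<longleftrightarrow> (\<forall>i\<in>I. x i < X i \<omega>)"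
        unfolding E_def using I by (auto split: if_splits)
      finally show ?thesis .
    qed
    then show ?thesis by blast
  qed
  have "measure M {\<omega>\<in>space M. \<forall>i\<in>I. x i < X i \<omega>} = measure (distr M S F) A"
    using pre by (simp add: measure_distr[OF F_meas A_sets])
  also have "\<dots> = enn2real (emeasure (N \<bind> K) A)"
    unfolding jointK measure_def ..
  also have "emeasure (N \<bind> K) A = (\<integral>\<^sup>+\<theta>. emeasure (K \<theta>) A \<partial>N)"
    by (rule emeasure_bind[OF _ K_meas A_sets]) (simp add: N_def)
  also have "\<dots> = (\<integral>\<^sup>+\<theta>. ennreal (theta_density \<alpha> l \<theta>) * emeasure (K \<theta>) A \<partial>lborel)"
    unfolding N_def
  proof (rule nn_integral_density)
    show "(\<lambda>\<theta>. emeasure (K \<theta>) A) \<in> borel_measurable lborel"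
    proof -
      have eq: "measurable N borel = measurable lborel borel"
        by (rule measurable_cong_sets) (simp_all add: N_def)
      show ?thesis using measurable_emeasure_kernel[OF K_meas A_sets] unfolding eq .
    qed
  qed (auto simp: theta_density_nonneg[OF a l])
  also have "\<dots> = (\<integral>\<^sup>+\<theta>. ennreal (theta_density \<alpha> l \<theta>) * ennreal (exp (- (\<theta> * (\<Sum>i\<in>I. x i)))) \<partial>lborel)"
  proof (intro nn_integral_cong)
    fix \<theta> :: real
    show "ennreal (theta_density \<alpha> l \<theta>) * emeasure (K \<theta>) A = ennreal (theta_density \<alpha> l \<theta>) * ennreal (exp (- (\<theta> * (\<Sum>i\<in>I. x i))))"
    proof (cases "l \<le> \<theta>")
      case False
      then show ?thesis by (simp add: theta_density_def)
    next
      case True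
      then have th: "\<theta> > 0" using l by simp
      have mP: "(\<lambda>y. (\<theta>, y)) \<in> Pexp n \<theta> \<rightarrow>\<^sub>M S"
        unfolding S_def by (simp add: measurable_cong_sets[OF refl sets_Pexp])
      have "emeasure (K \<theta>) A = emeasure (Pexp n \<theta>) ((\<lambda>y. (\<theta>, y)) -` A \<inter> space (Pexp n \<theta>))"
        unfolding K_def by (rule emeasure_distr[OF mP A_sets])
      also have "(\<lambda>y. (\<theta>, y)) -` A \<inter> space (Pexp n \<theta>) = Pi\<^sub>E {..<n} E"
        unfolding A_def space_Pexp by (auto simp: PiE_iff)
      also have "emeasure (Pexp n \<theta>) (Pi\<^sub>E {..<n} E) = (\<Prod>i<n. emeasure (Dexp \<theta>) (E i))"
        by (rule emeasure_Pexp) (simp add: E_sets)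
      also have "\<dots> = (\<Prod>i<n. ennreal (if i \<in> I then exp (- (\<theta> * x i)) else 1))"
        by (intro prod.cong) (auto simp: E_def emeasure_Dexp_gt th x emeasure_Dexp_UNIV)
      also have "\<dots> = ennreal (\<Prod>i<n. (if i \<in> I then exp (- (\<theta> * x i)) else 1))"
        by (rule prod_ennreal) simp
      also have "(\<Prod>i<n. (if i \<in> I then exp (- (\<theta> * x i)) else 1)) = (\<Prod>i\<in>I. exp (- (\<theta> * x i)))"
        using I by (simp add: prod.If_cases Int_absorb1)
      also have "\<dots> = exp (- (\<theta> * (\<Sum>i\<in>I. x i)))"
        using finite_subset[OF I finite_lessThan] by (simp add: sum_distrib_left sum_negf[symmetric] exp_sum)
      finally show ?thesis by simp
    qed
  qed
  also have "\<dots> = ennreal (upper_inc_Gamma \<alpha> (l * (\<Sum>i\<in>I. x i)) / Gamma \<alpha>)"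
    by (rule mix_int[OF a l]) (simp add: x sum_nonneg)
  finally show ?thesis
    using upper_real[OF a(1), of "l * (\<Sum>i\<in>I. x i)"] l x
    by (simp add: sum_nonneg Gamma_real_pos a(1))
qed



theorem theorem5:
  fixes M :: "'a measure" and \<Theta> :: "'a \<Rightarrow> real" and X :: "nat \<Rightarrow> 'a \<Rightarrow> real"
    and \<alpha> l :: real and n :: nat
  assumes "prob_space M"
    and "0 < \<alpha>" and "\<alpha> < 1" and "0 < l"
    and "\<Theta> \<in> borel_measurable M" and "\<And>i. i < n \<Longrightarrow> X i \<in> borel_measurable M"
    and joint: "distr M (borel \<Otimes>\<^sub>M (\<Pi>\<^sub>M i\<in>{..<n}. borel))
                   (\<lambda>\<omega>. (\<Theta> \<omega>, \<lambda>i\<in>{..<n}. X i \<omega>))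
              = density lborel (theta_density \<alpha> l) \<bind>
                  (\<lambda>\<theta>. distr (\<Pi>\<^sub>M i\<in>{..<n}. density lborel (exponential_density \<theta>))
                          (borel \<Otimes>\<^sub>M (\<Pi>\<^sub>M i\<in>{..<n}. borel)) (\<lambda>x. (\<theta>, x)))"
  shows "(\<forall>i<n. \<forall>t\<ge>0. measure M {\<omega>\<in>space M. X i \<omega> > t} = marg_surv \<alpha> l t)
       \<and> (\<forall>x. (\<forall>i<n. 0 \<le> x i) \<longrightarrow>
            measure M {\<omega>\<in>space M. \<forall>i<n. X i \<omega> > x i}
              = surv_copula \<alpha> n (\<lambda>i. marg_surv \<alpha> l (x i)))"
proof (intro conjI allI impI)
  fix i :: nat and t :: real assume i: "i < n" and t: "0 \<le> t"
  have "measure M {\<omega>\<in>space M. \<forall>j\<in>{i}. (\<lambda>_. t) j < X j \<omega>} = upper_inc_Gamma \<alpha> (l * (\<Sum>j\<in>{i}. (\<lambda>_. t) j)) / Gamma \<alpha>"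
    by (rule main_gen[OF assms]) (use i t in auto)
  then show "measure M {\<omega>\<in>space M. X i \<omega> > t} = marg_surv \<alpha> l t"
    by (simp add: marg_surv_def)
next
  fix x :: "nat \<Rightarrow> real" assume x: "\<forall>i<n. 0 \<le> x i"
  have a: "0 < \<alpha>" "\<alpha> < 1" and l: "0 < l" by fact+
  have m1: "measure M {\<omega>\<in>space M. \<forall>i\<in>{..<n}. x i < X i \<omega>} = upper_inc_Gamma \<alpha> (l * (\<Sum>i\<in>{..<n}. x i)) / Gamma \<alpha>"
    by (rule main_gen[OF assms]) (use x in auto)
  have m2: "upper_inc_Gamma \<alpha> (l * (\<Sum>i\<in>{..<n}. x i)) / Gamma \<alpha> = 1 - gamma_cdf \<alpha> (l * (\<Sum>i<n. x i))"
  proof -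
    have "0 \<le> l * (\<Sum>i<n. x i)" using l x by (intro mult_nonneg_nonneg sum_nonneg) auto
    from cdf_eq[OF a(1) this] show ?thesis by simp
  qed
  have m3: "(\<Sum>i<n. gamma_quantile \<alpha> (1 - marg_surv \<alpha> l (x i))) = (\<Sum>i<n. l * x i)"
  proof (intro sum.cong refl)
    fix i assume "i \<in> {..<n}"
    then have xi: "0 \<le> l * x i" using x l by simp
    have "1 - marg_surv \<alpha> l (x i) = gamma_cdf \<alpha> (l * x i)"
      using cdf_eq[OF a(1) xi] by (simp add: marg_surv_def)
    then show "gamma_quantile \<alpha> (1 - marg_surv \<alpha> l (x i)) = l * x i"
      using quantile_cdf[OF a xi] by simp
  qed
  have m4: "surv_copula \<alpha> n (\<lambda>i. marg_surv \<alpha> l (x i)) = 1 - gamma_cdf \<alpha> (l * (\<Sum>i<n. x i))"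
    unfolding surv_copula_def m3 by (simp add: sum_distrib_left)
  have eqset: "{\<omega>\<in>space M. \<forall>i<n. X i \<omega> > x i} = {\<omega>\<in>space M. \<forall>i\<in>{..<n}. x i < X i \<omega>}"
    by auto
  show "measure M {\<omega>\<in>space M. \<forall>i<n. X i \<omega> > x i} = surv_copula \<alpha> n (\<lambda>i. marg_surv \<alpha> l (x i))"
    unfolding eqset m1 m2 m4 ..
qed

end
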